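(* Let $\mathrm{IC}(\mathbf{a}_0,\dots,\mathbf{a}_{n-1})$ be an interval circulant matrix. For any nonzero $A\in\mathrm{IC}(\mathbf{a}_0,\dots,\mathbf{a}_{n-1})$ there exists $k\in\{0,\dots,n-1\}$ such that $A^{(k)}\ne0$ and $A^{(k)}/\lambda(A^{(k)})\le A/\lambda(A)$ entrywise.
   Context: $\mathrm{Circ}(a_0,\dots,a_{n-1})$ is the matrix with $A_{i,j}=a_t$, $t\in\{0,\dots,n-1\}$, $t\equiv j-i\pmod n$. $\mathrm{IC}(\mathbf{a}_0,\dots,\mathbf{a}_{n-1})$ is the set of all $\mathrm{Circ}(a_0,\dots,a_{n-1})$ with $a_t\in\mathbf{a}_t$, where each $\mathbf{a}_t\subseteq\mathbb{R}_+$ is a nonempty interval of one of the forms $[\underline{a}_t,\overline{a}_t]$, $(\underline{a}_t,\overline{a}_t)$, $(\underline{a}_t,\overline{a}_t]$, $[\underline{a}_t,\overline{a}_t)$. For $k\in\{0,\dots,n-1\}$, $A^{(k)}=\mathrm{Circ}(\underline{a}_0,\dots,\underline{a}_{k-1},\overline{a}_k,\underline{a}_{k+1},\dots,\underline{a}_{n-1})$. $\lambda(\cdot)$ is the greatest max-algebraic eigenvalue (maximum cycle geometric mean). *)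

theory Defs
  imports Complex_Main
begin

text \<open>n x n matrices are functions nat => nat => real, indices 0..n-1, zero outside.\<close>

definition circ :: "nat \<Rightarrow> (nat \<Rightarrow> real) \<Rightarrow> (nat \<Rightarrow> nat \<Rightarrow> real)" where
  "circ n a = (\<lambda>i j. if i < n \<and> j < n then a ((j + n - i) mod n) else 0)"

definition ivl :: "real \<Rightarrow> real \<Rightarrow> bool \<Rightarrow> bool \<Rightarrow> real set" where
  "ivl lo hi lc rc = {x. (if lc then lo \<le> x else lo < x) \<and> (if rc then x \<le> hi else x < hi)}"

definition IC :: "nat \<Rightarrow> (nat \<Rightarrow> real) \<Rightarrow> (nat \<Rightarrow> real) \<Rightarrow> (nat \<Rightarrow> bool) \<Rightarrow> (nat \<Rightarrow> bool)
                   \<Rightarrow> (nat \<Rightarrow> nat \<Rightarrow> real) set" where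
  "IC n lo hi lc rc = {circ n a | a. \<forall>t<n. a t \<in> ivl (lo t) (hi t) (lc t) (rc t)}"

definition Ak :: "nat \<Rightarrow> (nat \<Rightarrow> real) \<Rightarrow> (nat \<Rightarrow> real) \<Rightarrow> nat \<Rightarrow> (nat \<Rightarrow> nat \<Rightarrow> real)" where
  "Ak n lo hi k = circ n (\<lambda>t. if t = k then hi t else lo t)"

text \<open>Max-algebraic eigenvalue = maximum cycle geometric mean, taken over all closed walks
  p 0 -> p 1 -> ... -> p m = p 0 of length 1 <= m <= n (equal to the max over elementary cycles).\<close>
definition mp_lambda :: "nat \<Rightarrow> (nat \<Rightarrow> nat \<Rightarrow> real) \<Rightarrow> real" where
  "mp_lambda n A = Max {root m (\<Prod>j<m. A (p j) (p (Suc j))) | m p.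
      1 \<le> m \<and> m \<le> n \<and> (\<forall>j\<le>m. p j < n) \<and> p m = p 0}"

end

theory Submission
  imports Defs "HOL-Library.FuncSet"
begin

lemma modlem:
  fixes n k j :: nat assumes "k < n"
  shows "((Suc j * k) mod n + n - (j * k) mod n) mod n = k"
proof -
  have x: "(j*k) mod n < n" using assms by simp
  have "int (((Suc j * k) mod n + n - (j * k) mod n) mod n)
        = (int ((Suc j * k) mod n) + int n - int ((j * k) mod n)) mod int n"
    using x by (simp add: zmod_int of_nat_diff)
  also have "\<dots> = (int (Suc j * k) + int n - int (j * k)) mod int n"
    by (metis mod_diff_left_eq mod_diff_right_eq mod_add_left_eq zmod_int)
  also have "\<dots> = int k"
    using assms by (simp add: algebra_simps)
  finally show ?thesis by simp
qed

lemma lam_circ: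
  fixes c :: "nat \<Rightarrow> real"
  assumes n: "n \<ge> 1" and nn: "\<forall>t<n. 0 \<le> c t" and k: "k < n" and mx: "\<forall>t<n. c t \<le> c k"
  shows "mp_lambda n (circ n c) = c k"
proof -
  define A where "A = circ n c"
  define f where "f = (\<lambda>(m::nat, p::nat\<Rightarrow>nat). root m (\<Prod>j<m. A (p j) (p (Suc j))))"
  let ?S = "{root m (\<Prod>j<m. A (p j) (p (Suc j))) | m p.
      1 \<le> m \<and> m \<le> n \<and> (\<forall>j\<le>m. p j < n) \<and> p m = p 0}"
  have Ale: "0 \<le> A i j \<and> A i j \<le> c k" for i j
    unfolding A_def circ_def using nn mx k by auto
  have sub: "?S \<subseteq> f ` (SIGMA m:{1..n}. {..m} \<rightarrow>\<^sub>E {..<n})"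
  proof
    fix x assume "x \<in> ?S"
    then obtain m p where x: "x = root m (\<Prod>j<m. A (p j) (p (Suc j)))" and m: "1 \<le> m" "m \<le> n"
      and p: "\<forall>j\<le>m. p j < n" by blast
    have "x = f (m, restrict p {..m})" unfolding x f_def
      by (auto intro!: prod.cong arg_cong[where f="root m"])
    moreover have "(m, restrict p {..m}) \<in> (SIGMA m:{1..n}. {..m} \<rightarrow>\<^sub>E {..<n})"
      using m p by auto
    ultimately show "x \<in> f ` (SIGMA m:{1..n}. {..m} \<rightarrow>\<^sub>E {..<n})" by blast
  qed
  have fin: "finite ?S"
    by (rule finite_subset[OF sub]) (auto intro!: finite_PiE)
  have ub: "x \<le> c k" if "x \<in> ?S" for x
  proof -
    obtain m p where x: "x = root m (\<Prod>j<m. A (p j) (p (Suc j)))" and m: "1 \<le> m"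
      using \<open>x \<in> ?S\<close> by blast
    have "(\<Prod>j<m. A (p j) (p (Suc j))) \<le> (\<Prod>j<m. c k)"
      by (rule prod_mono) (use Ale in auto)
    hence "x \<le> root m (c k ^ m)" unfolding x using m by (simp add: real_root_le_iff)
    also have "\<dots> = c k" using m nn k by (intro real_root_power_cancel) auto
    finally show ?thesis .
  qed
  define p where "p = (\<lambda>j. (j * k) mod n)"
  have step: "A (p j) (p (Suc j)) = c k" for j
    unfolding A_def circ_def p_def using n k modlem[OF k, of j] by auto
  have "root n (\<Prod>j<n. A (p j) (p (Suc j))) \<in> ?S"
    using n by (auto simp: p_def intro!: exI[of _ n] exI[of _ p])
  moreover have "root n (\<Prod>j<n. A (p j) (p (Suc j))) = c k"
    using step n nn k by (simp add: real_root_power_cancel)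
  ultimately have mem: "c k \<in> ?S" by simp
  show ?thesis unfolding mp_lambda_def A_def[symmetric]
    by (rule Max_eqI[OF fin]) (use ub mem in auto)
qed

theorem lemma4:
  fixes n :: nat and lo hi :: "nat \<Rightarrow> real" and lc rc :: "nat \<Rightarrow> bool"
    and A :: "nat \<Rightarrow> nat \<Rightarrow> real"
  assumes "n \<ge> 1"
    and "\<forall>t<n. 0 \<le> lo t"
    and "\<forall>t<n. ivl (lo t) (hi t) (lc t) (rc t) \<noteq> {}"
    and "A \<in> IC n lo hi lc rc"
    and "A \<noteq> (\<lambda>i j. 0)"
  shows "\<exists>k<n. Ak n lo hi k \<noteq> (\<lambda>i j. 0) \<and>
           (\<forall>i<n. \<forall>j<n. Ak n lo hi k i j / mp_lambda n (Ak n lo hi k) \<le> A i j / mp_lambda n A)"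
proof -
  obtain a where Aa: "A = circ n a" and ai: "\<forall>t<n. a t \<in> ivl (lo t) (hi t) (lc t) (rc t)"
    using assms(4) unfolding IC_def by blast
  have alo: "lo t \<le> a t" and ahi: "a t \<le> hi t" if "t < n" for t
    using ai that unfolding ivl_def by (auto split: if_splits)
  have a0: "0 \<le> a t" if "t < n" for t using alo[OF that] assms(2) that by force
  define M where "M = Max (a ` {..<n})"
  have "M \<in> a ` {..<n}" unfolding M_def using assms(1) by (intro Max_in) (auto simp: lessThan_empty_iff)
  then obtain k where k: "k < n" "a k = M" by auto
  have amx: "\<forall>t<n. a t \<le> a k" using k unfolding M_def by auto
  have apos: "a k > 0"
  proof (rule ccontr)
    assume "\<not> a k > 0"
    hence "\<forall>t<n. a t = 0" using amx a0 by (meson antisym not_le order_trans)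
    hence "A = (\<lambda>i j. 0)" unfolding Aa circ_def by (auto intro!: ext)
    with assms(5) show False by simp
  qed
  define b where "b = (\<lambda>t. if t = k then hi t else lo t)"
  have hk: "hi k \<ge> a k" using ahi k by auto
  have bmx: "\<forall>t<n. b t \<le> b k" unfolding b_def
    using amx alo hk by (smt (verit))
  have bnn: "\<forall>t<n. 0 \<le> b t" unfolding b_def using assms(2) hk apos by auto
  have lA: "mp_lambda n A = a k" unfolding Aa using lam_circ[OF assms(1) _ k(1) amx] a0 by auto
  have lB: "mp_lambda n (Ak n lo hi k) = hi k"
    unfolding Ak_def b_def[symmetric] using lam_circ[OF assms(1) bnn k(1) bmx] by (simp add: b_def)
  have nz: "Ak n lo hi k \<noteq> (\<lambda>i j. 0)"
  proof
    assume "Ak n lo hi k = (\<lambda>i j. 0)"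
    hence "Ak n lo hi k 0 k = 0" by simp
    moreover have "Ak n lo hi k 0 k = hi k" unfolding Ak_def circ_def using k by simp
    ultimately show False using hk apos by simp
  qed
  have ineq: "Ak n lo hi k i j / hi k \<le> A i j / a k" if "i < n" "j < n" for i j
  proof -
    define t where "t = (j + n - i) mod n"
    have t: "t < n" unfolding t_def using assms(1) by simp
    have e1: "Ak n lo hi k i j = b t" unfolding Ak_def b_def[symmetric] circ_def t_def using that by simp
    have e2: "A i j = a t" unfolding Aa circ_def t_def using that by simp
    show ?thesis
    proof (cases "t = k")
      case True thus ?thesis using e1 e2 b_def apos hk by simp
    next
      case False
      have "lo t / hi k \<le> a t / hi k" using alo[OF t] hk apos by (simp add: divide_right_mono)
      also have "\<dots> \<le> a t / a k" using a0[OF t] hk apos by (simp add: divide_left_mono)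
      finally show ?thesis using e1 e2 False b_def by simp
    qed
  qed
  show ?thesis using k nz ineq lA lB by auto
qed

end
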